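(* Let $C:\mathbb{R}^n\to\mathbb{R}$ be convex, increasing, and $\mathbf{1}$-invariant with $C(\mathbf{0})>0$, and suppose additionally $\{\mathbf{q} \mid C(\mathbf{q})=0\} \subseteq \mathbb{R}^n_{<0}$. Define $\varphi:\mathbb{R}^n_{>0}\to\mathbb{R}$ by $\varphi(\mathbf{q})=\alpha$ where $\alpha>0$ satisfies $C(-\mathbf{q}/\alpha)=0$. Then $\varphi$ defines a CFMM satisfying Liquidation, NoDominatedTrades, PathIndependence, DemandResponsiveness, and BoundedReserves.
   Context: There are $n$ assets. A trade $\mathbf{r}\in\mathbb{R}^n$ gives $r_i$ net units of asset $i$ to the market maker. A history $h$ is an ordered list of trades; $\epsilon=()$ is the empty history, $h\oplus\mathbf{r}$ appends $\mathbf{r}$. The first entry of a history is the initial reserves and $\mathbf{q}_h=\mathsf{sum}(h)$ is the current reserves. A market maker is a map $h\mapsto\mathsf{ValTrades}(h)\subseteq\mathbb{R}^n$; $\mathsf{ValTrades}(\epsilon)$ is the set of allowed initial reserves; $\mathsf{ValHist}(\epsilon)$ is the set of nonempty histories reachable by appending valid trades. $\mathbf{1}$ is the all-ones vector. Componentwise order: $\mathbf{x}\succeq\mathbf{y}$ iff $x_i\ge y_i$ for all $i$; $\mathbf{x}\succ\mathbf{y}$ iff $x_i>y_i$ for all $i$; $\mathbb{R}^n_{>0}=\{\mathbf{q}\succ\mathbf{0}\}$, $\mathbb{R}^n_{<0}=\{\mathbf{q}\prec\mathbf{0}\}$. $C$ is increasing if $C(\mathbf{x})>C(\mathbf{y})$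 whenever $\mathbf{x}\succeq\mathbf{y}$, $\mathbf{x}\neq\mathbf{y}$; $\mathbf{1}$-invariant if $C(\mathbf{q}+a\mathbf{1})=C(\mathbf{q})+a$. The map $\varphi$ is well defined (the root $\alpha$ exists and is unique). A CFMM with potential $\varphi$ has $\mathsf{ValTrades}(h)=\{\mathbf{r}\mid\varphi(\mathbf{q}_h+\mathbf{r})=\varphi(\mathbf{q}_h)\}$, with $\mathsf{ValTrades}(\epsilon)=\mathbb{R}^n_{>0}$. Axioms: NoDominatedTrades: for all $h\in\mathsf{ValHist}(\epsilon)$, no $\mathbf{r},\mathbf{r}'\in\mathsf{ValTrades}(h)$ with $\mathbf{r}'\succeq\mathbf{r}$, $\mathbf{r}'\neq\mathbf{r}$. PathIndependence: $\mathbf{r}\in\mathsf{ValTrades}(h)$ and $\mathbf{r}'\in\mathsf{ValTrades}(h\oplus\mathbf{r})$ imply $\mathbf{r}+\mathbf{r}'\in\mathsf{ValTrades}(h)$. Liquidation: for all $h\in\mathsf{ValHist}(\epsilon)$ and all $\mathbf{r},\mathbf{r}'\succeq\mathbf{0}$ with $\mathbf{r}\neq\mathbf{0}\neq\mathbf{r}'$, there is $\beta\ge0$ with $\mathbf{r}-\beta\mathbf{r}'\in\mathsf{ValTrades}(h)$. DemandResponsiveness: if $\mathbf{r}-\mathbf{r}'\in\mathsf{ValTrades}(h)$ with $\mathbf{r},\mathbf{r}'\succeq\mathbf{0}$ and $\alpha\mathbf{r}-\beta\mathbf{r}'\in\mathsf{ValTrades}(h\oplus(\mathbf{r}-\mathbf{r}'))$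 for some $\alpha,\beta>0$, then $\beta\le\alpha$. BoundedReserves: $\mathbb{R}^n_{>0}\subseteq\mathsf{ValTrades}(\epsilon)$ and $\mathbf{q}_h\succeq\mathbf{0}$ for all $h\in\mathsf{ValHist}(\epsilon)$. *)

theory Defs
  imports "HOL-Analysis.Analysis"
begin

text \<open>Assets are indexed by a finite type 'n; vectors live in real^'n.
  A history is a list of trades (first entry = initial reserves), the empty
  history is [], and appending a trade r to h is h @ [r].\<close>

definition vge :: "real^'n \<Rightarrow> real^'n \<Rightarrow> bool" where
  "vge x y \<longleftrightarrow> (\<forall>i. y $ i \<le> x $ i)"

definition pos_orthant :: "(real^'n) set" where
  "pos_orthant = {q. \<forall>i. 0 < q $ i}"

definition neg_orthant :: "(real^'n) set" where
  "neg_orthant = {q. \<forall>i. q $ i < 0}"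

definition increasing_fn :: "(real^'n \<Rightarrow> real) \<Rightarrow> bool" where
  "increasing_fn C \<longleftrightarrow> (\<forall>x y. vge x y \<and> x \<noteq> y \<longrightarrow> C y < C x)"

definition one_invariant :: "(real^'n \<Rightarrow> real) \<Rightarrow> bool" where
  "one_invariant C \<longleftrightarrow> (\<forall>q a. C (q + a *\<^sub>R vec 1) = C q + a)"

definition reserves :: "(real^'n) list \<Rightarrow> real^'n" where
  "reserves h = sum_list h"

inductive_set valhist :: "((real^'n) list \<Rightarrow> (real^'n) set) \<Rightarrow> ((real^'n) list) set"
  for VT :: "(real^'n) list \<Rightarrow> (real^'n) set" where
  init: "r \<in> VT [] \<Longrightarrow> [r] \<in> valhist VT"
| step: "h \<in> valhist VT \<Longrightarrow> r \<in> VT h \<Longrightarrow> h @ [r] \<in> valhist VT"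

text \<open>phi(q) = the alpha > 0 with C(-q/alpha) = 0 (meaningful on the positive orthant).\<close>
definition potential :: "(real^'n \<Rightarrow> real) \<Rightarrow> real^'n \<Rightarrow> real" where
  "potential C q = (THE \<alpha>. 0 < \<alpha> \<and> C (- (inverse \<alpha> *\<^sub>R q)) = 0)"

definition cfmm :: "(real^'n \<Rightarrow> real) \<Rightarrow> (real^'n) list \<Rightarrow> (real^'n) set" where
  "cfmm phi h = (if h = [] then pos_orthant
     else {r. reserves h + r \<in> pos_orthant \<and> phi (reserves h + r) = phi (reserves h)})"

definition NoDominatedTrades :: "((real^'n) list \<Rightarrow> (real^'n) set) \<Rightarrow> bool" where
  "NoDominatedTrades VT \<longleftrightarrow>
     (\<forall>h \<in> valhist VT. \<not> (\<exists>r r'. r \<in> VT h \<and> r' \<in> VT h \<and> vge r' r \<and> r' \<noteq> r))"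

definition PathIndependence :: "((real^'n) list \<Rightarrow> (real^'n) set) \<Rightarrow> bool" where
  "PathIndependence VT \<longleftrightarrow>
     (\<forall>h r r'. r \<in> VT h \<longrightarrow> r' \<in> VT (h @ [r]) \<longrightarrow> r + r' \<in> VT h)"

definition Liquidation :: "((real^'n) list \<Rightarrow> (real^'n) set) \<Rightarrow> bool" where
  "Liquidation VT \<longleftrightarrow>
     (\<forall>h \<in> valhist VT. \<forall>r r'. vge r 0 \<and> vge r' 0 \<and> r \<noteq> 0 \<and> r' \<noteq> 0 \<longrightarrow>
        (\<exists>\<beta>\<ge>0. r - \<beta> *\<^sub>R r' \<in> VT h))"

definition DemandResponsiveness :: "((real^'n) list \<Rightarrow> (real^'n) set) \<Rightarrow> bool" where
  "DemandResponsiveness VT \<longleftrightarrow>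
     (\<forall>h \<in> valhist VT. \<forall>r r' \<alpha> \<beta>.
        vge r 0 \<and> vge r' 0 \<and> r \<noteq> 0 \<and> r' \<noteq> 0 \<and> r - r' \<in> VT h \<and> 0 < \<alpha> \<and> 0 < \<beta> \<and>
        \<alpha> *\<^sub>R r - \<beta> *\<^sub>R r' \<in> VT (h @ [r - r']) \<longrightarrow> \<beta> \<le> \<alpha>)"

definition BoundedReserves :: "((real^'n) list \<Rightarrow> (real^'n) set) \<Rightarrow> bool" where
  "BoundedReserves VT \<longleftrightarrow>
     pos_orthant \<subseteq> VT [] \<and> (\<forall>h \<in> valhist VT. vge (reserves h) 0)"

end

theory Submission
  imports Defs
begin

lemma incD:
  assumes "increasing_fn C" "\<And>i. y $ i \<le> x $ i" "x \<noteq> y"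
  shows "C y < C x"
  using assms unfolding increasing_fn_def vge_def by blast

lemma C_cont:
  fixes C :: "real^'n \<Rightarrow> real"
  assumes "convex_on UNIV C"
  shows "continuous_on UNIV C"
  using convex_on_continuous[OF open_UNIV assms] .

lemma pos_side:
  fixes C :: "real^'n \<Rightarrow> real"
  assumes inc: "increasing_fn C" and inv: "one_invariant C"
    and z: "{q. C q = 0} \<subseteq> neg_orthant" and xi: "x $ i \<ge> 0"
  shows "C x > 0"
proof (rule ccontr)
  assume "\<not> C x > 0"
  hence le: "C x \<le> 0" by simp
  define t where "t = - C x"
  have "C (x + t *\<^sub>R vec 1) = C x + t" using inv unfolding one_invariant_def by blast
  hence "C (x + t *\<^sub>R vec 1) = 0" by (simp add: t_def)
  hence "x + t *\<^sub>R vec 1 \<in> neg_orthant" using z by blast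
  hence "(x + t *\<^sub>R vec 1) $ i < 0" unfolding neg_orthant_def by blast
  thus False using xi le by (simp add: t_def)
qed

lemma ray_strict:
  fixes C :: "real^'n \<Rightarrow> real"
  assumes inc: "increasing_fn C" and y: "y \<in> pos_orthant" and st: "s < t"
  shows "C (- (t *\<^sub>R y)) < C (- (s *\<^sub>R y))"
proof (rule incD[OF inc])
  show "\<And>i. (- (t *\<^sub>R y)) $ i \<le> (- (s *\<^sub>R y)) $ i"
    using y st unfolding pos_orthant_def by (simp add: mult_right_mono)
  obtain i :: 'n where True by simp
  have "y $ i > 0" using y unfolding pos_orthant_def by blast
  hence "(- (t *\<^sub>R y)) $ i \<noteq> (- (s *\<^sub>R y)) $ i"
    using st by simp
  thus "- (s *\<^sub>R y) \<noteq> - (t *\<^sub>R y)" by metis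
qed

lemma root_unique:
  fixes C :: "real^'n \<Rightarrow> real"
  assumes inc: "increasing_fn C" and y: "y \<in> pos_orthant"
    and a: "0 < a" "C (- (inverse a *\<^sub>R y)) = 0"
    and b: "0 < b" "C (- (inverse b *\<^sub>R y)) = 0"
  shows "a = b"
proof (rule ccontr)
  assume "a \<noteq> b"
  hence "inverse a \<noteq> inverse b" by simp
  hence "inverse a < inverse b \<or> inverse b < inverse a" by linarith
  thus False
  proof
    assume "inverse a < inverse b"
    from ray_strict[OF inc y this] show False using a b by simp
  next
    assume "inverse b < inverse a"
    from ray_strict[OF inc y this] show False using a b by simp
  qed
qed

lemma root_exists:
  fixes C :: "real^'n \<Rightarrow> real"
  assumes cv: "convex_on UNIV C" and inc: "increasing_fn C" and inv: "one_invariant C"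
    and c0: "C 0 > 0" and y: "y \<in> pos_orthant"
  shows "\<exists>a. 0 < a \<and> C (- (inverse a *\<^sub>R y)) = 0"
proof -
  define m where "m = Min (range (\<lambda>i. y $ i))"
  have m_le: "m \<le> y $ i" for i unfolding m_def by (rule Min_le) auto
  have m_pos: "m > 0" unfolding m_def using y unfolding pos_orthant_def
    by (subst Min_gr_iff) auto
  define T where "T = (C 0 + 1) / m"
  have Tpos: "T > 0" using c0 m_pos by (simp add: T_def)
  have "C (- (T *\<^sub>R y)) \<le> C (0 + (- T * m) *\<^sub>R vec 1)"
  proof (cases "- (T *\<^sub>R y) = 0 + (- T * m) *\<^sub>R vec 1")
    case False
    have "C (- (T *\<^sub>R y)) < C (0 + (- T * m) *\<^sub>R vec 1)"
      apply (rule incD[OF inc _ False[symmetric]])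
      using m_le Tpos by (simp add: mult_left_mono)
    thus ?thesis by simp
  next
    case True
    show ?thesis unfolding True by (rule order_refl)
  qed
  also have "\<dots> = C 0 + (- T * m)" using inv[unfolded one_invariant_def, rule_format, of 0 "- T * m"] .
  also have "\<dots> = -1" using m_pos by (simp add: T_def)
  finally have gT: "C (- (T *\<^sub>R y)) \<le> 0" by simp
  have cont: "continuous_on {0..T} (\<lambda>t. C (- (t *\<^sub>R y)))"
    by (intro continuous_on_compose2[OF C_cont[OF cv]] continuous_intros) auto
  have c0': "0 \<le> C (- (0 *\<^sub>R y))" using c0 by simp
  obtain t where t: "0 \<le> t" "t \<le> T" "C (- (t *\<^sub>R y)) = 0"
    using IVT2'[of "\<lambda>t. C (- (t *\<^sub>R y))" T 0 0, OF gT c0' less_imp_le[OF Tpos] cont] by blast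
  have "t \<noteq> 0" using t c0 by auto
  hence "0 < inverse t \<and> C (- (inverse (inverse t) *\<^sub>R y)) = 0" using t by simp
  thus ?thesis by blast
qed

lemma phi_char:
  fixes C :: "real^'n \<Rightarrow> real"
  assumes cv: "convex_on UNIV C" and inc: "increasing_fn C" and inv: "one_invariant C"
    and c0: "C 0 > 0" and y: "y \<in> pos_orthant"
  shows "0 < potential C y \<and> C (- (inverse (potential C y) *\<^sub>R y)) = 0"
proof -
  have "\<exists>!a. 0 < a \<and> C (- (inverse a *\<^sub>R y)) = 0"
    using root_exists[OF cv inc inv c0 y] root_unique[OF inc y] by blast
  thus ?thesis unfolding potential_def by (rule theI')
qed

lemma phi_eq:
  fixes C :: "real^'n \<Rightarrow> real"
  assumes cv: "convex_on UNIV C" and inc: "increasing_fn C" and inv: "one_invariant C"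
    and c0: "C 0 > 0" and y: "y \<in> pos_orthant"
    and a: "0 < a" "C (- (inverse a *\<^sub>R y)) = 0"
  shows "potential C y = a"
  using root_unique[OF inc y _ _ a] phi_char[OF cv inc inv c0 y] by blast

lemma valhist_ne: "h \<in> valhist VT \<Longrightarrow> h \<noteq> []"
  by (induction rule: valhist.induct) auto

lemma valhist_pos:
  "h \<in> valhist (cfmm phi) \<Longrightarrow> reserves h \<in> pos_orthant"
proof (induction rule: valhist.induct)
  case (init r) thus ?case by (simp add: cfmm_def reserves_def)
next
  case (step h r)
  hence "h \<noteq> []" using valhist_ne by blast
  with step show ?case by (simp add: cfmm_def reserves_def)
qed


lemma liquidation:
  fixes C :: "real^'n \<Rightarrow> real"
  assumes cv: "convex_on UNIV C" and inc: "increasing_fn C" and inv: "one_invariant C"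
    and c0: "C 0 > 0" and z: "{q. C q = 0} \<subseteq> neg_orthant"
  shows "Liquidation (cfmm (potential C))"
  unfolding Liquidation_def
proof (intro ballI allI impI)
  fix h and r r' :: "real^'n"
  assume h: "h \<in> valhist (cfmm (potential C))"
    and rr: "vge r 0 \<and> vge r' 0 \<and> r \<noteq> 0 \<and> r' \<noteq> 0"
  define q where "q = reserves h"
  have qp: "q \<in> pos_orthant" unfolding q_def using valhist_pos[OF h] .
  have hne: "h \<noteq> []" using valhist_ne[OF h] .
  define \<alpha> where "\<alpha> = potential C q"
  have al: "0 < \<alpha>" "C (- (inverse \<alpha> *\<^sub>R q)) = 0"
    unfolding \<alpha>_def using phi_char[OF cv inc inv c0 qp] by auto
  have qi: "q $ i > 0" for i using qp unfolding pos_orthant_def by blast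
  have ri: "r $ i \<ge> 0" for i using rr unfolding vge_def by simp
  have r'i: "r' $ i \<ge> 0" for i using rr unfolding vge_def by simp
  have "r \<noteq> 0" "r' \<noteq> 0" using rr by auto
  then obtain j j' where j: "r $ j \<noteq> 0" "r' $ j' \<noteq> 0" by (auto simp: vec_eq_iff)
  have rj: "r $ j > 0" using j(1) ri[of j] by simp
  have r'j: "r' $ j' > 0" using j(2) r'i[of j'] by simp
  define I where "I = {i. r' $ i > 0}"
  define val where "val i = (q $ i + r $ i) / r' $ i" for i
  define bs where "bs = Min (val ` I)"
  have Ine: "I \<noteq> {}" unfolding I_def using r'j by blast
  have finI: "finite (val ` I)" by simp
  have bs_le: "i \<in> I \<Longrightarrow> bs \<le> val i" for i unfolding bs_def by (rule Min_le) (use finI in auto)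
  obtain i0 where i0: "i0 \<in> I" "bs = val i0" using Min_in[OF finI] Ine unfolding bs_def by blast
  have "r' $ i0 > 0" using i0(1) unfolding I_def by simp
  hence bs_pos: "bs > 0" using i0(2) qi[of i0] ri[of i0] unfolding val_def
    by (simp add: add_pos_nonneg)
  define f where "f \<beta> = C (- (inverse \<alpha> *\<^sub>R (q + r - \<beta> *\<^sub>R r')))" for \<beta>
  have f0: "f 0 < 0"
  proof -
    have "C (- (inverse \<alpha> *\<^sub>R (q + r))) < C (- (inverse \<alpha> *\<^sub>R q))"
    proof (rule incD[OF inc])
      show "(- (inverse \<alpha> *\<^sub>R (q + r))) $ i \<le> (- (inverse \<alpha> *\<^sub>R q)) $ i" for i
        using al ri[of i] by (simp add: field_simps)
      have "(- (inverse \<alpha> *\<^sub>R (q + r))) $ j \<noteq> (- (inverse \<alpha> *\<^sub>R q)) $ j"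
        using al rj by simp
      thus "- (inverse \<alpha> *\<^sub>R q) \<noteq> - (inverse \<alpha> *\<^sub>R (q + r))" by metis
    qed
    thus ?thesis using al by (simp add: f_def)
  qed
  have fbs: "f bs > 0"
    unfolding f_def
  proof (rule pos_side[OF inc inv z])
    have "bs * r' $ i0 = q $ i0 + r $ i0" using i0 unfolding I_def val_def by simp
    thus "(- (inverse \<alpha> *\<^sub>R (q + r - bs *\<^sub>R r'))) $ i0 \<ge> 0" by simp
  qed
  have cont: "continuous_on {0..bs} f"
    unfolding f_def
    by (intro continuous_on_compose2[OF C_cont[OF cv]] continuous_intros) auto
  obtain \<beta> where b: "0 \<le> \<beta>" "\<beta> \<le> bs" "f \<beta> = 0"
    using IVT'[of f 0 0 bs, OF less_imp_le[OF f0] less_imp_le[OF fbs] less_imp_le[OF bs_pos] cont] by blast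
  have "\<beta> \<noteq> bs" using b fbs by auto
  hence blt: "\<beta> < bs" using b by simp
  have pp: "q + (r - \<beta> *\<^sub>R r') \<in> pos_orthant"
    unfolding pos_orthant_def
  proof (intro CollectI allI)
    fix i
    show "0 < (q + (r - \<beta> *\<^sub>R r')) $ i"
    proof (cases "i \<in> I")
      case True
      hence "\<beta> < val i" using bs_le[OF True] blt by simp
      hence "\<beta> * r' $ i < q $ i + r $ i" using True unfolding val_def I_def
        by (simp add: pos_less_divide_eq)
      thus ?thesis by simp
    next
      case False
      hence "r' $ i = 0" using r'i[of i] unfolding I_def by simp
      thus ?thesis using qi[of i] ri[of i] by simp
    qed
  qed
  have "C (- (inverse \<alpha> *\<^sub>R (q + (r - \<beta> *\<^sub>R r')))) = 0"
    using b unfolding f_def by (simp add: algebra_simps)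
  hence "potential C (q + (r - \<beta> *\<^sub>R r')) = \<alpha>"
    using phi_eq[OF cv inc inv c0 pp al(1)] by blast
  hence "r - \<beta> *\<^sub>R r' \<in> cfmm (potential C) h"
    using pp hne unfolding cfmm_def q_def \<alpha>_def by simp
  thus "\<exists>\<beta>\<ge>0. r - \<beta> *\<^sub>R r' \<in> cfmm (potential C) h" using b by blast
qed


lemma nodom:
  fixes C :: "real^'n \<Rightarrow> real"
  assumes cv: "convex_on UNIV C" and inc: "increasing_fn C" and inv: "one_invariant C"
    and c0: "C 0 > 0"
  shows "NoDominatedTrades (cfmm (potential C))"
  unfolding NoDominatedTrades_def
proof (intro ballI notI)
  fix h assume h: "h \<in> valhist (cfmm (potential C))"
  assume "\<exists>r r'. r \<in> cfmm (potential C) h \<and> r' \<in> cfmm (potential C) h \<and> vge r' r \<and> r' \<noteq> r"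
  then obtain r r' :: "real^'n" where rr: "r \<in> cfmm (potential C) h" "r' \<in> cfmm (potential C) h"
    "vge r' r" "r' \<noteq> r" by blast
  have hne: "h \<noteq> []" using valhist_ne[OF h] .
  define q where "q = reserves h"
  have x: "q + r \<in> pos_orthant" "potential C (q + r) = potential C q"
    using rr(1) hne unfolding cfmm_def q_def by auto
  have y: "q + r' \<in> pos_orthant" "potential C (q + r') = potential C q"
    using rr(2) hne unfolding cfmm_def q_def by auto
  define \<alpha> where "\<alpha> = potential C q"
  have ax: "0 < \<alpha>" "C (- (inverse \<alpha> *\<^sub>R (q + r))) = 0"
    using phi_char[OF cv inc inv c0 x(1)] x(2) unfolding \<alpha>_def by auto
  have ay: "C (- (inverse \<alpha> *\<^sub>R (q + r'))) = 0"
    using phi_char[OF cv inc inv c0 y(1)] y(2) unfolding \<alpha>_def by auto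
  have "C (- (inverse \<alpha> *\<^sub>R (q + r'))) < C (- (inverse \<alpha> *\<^sub>R (q + r)))"
  proof (rule incD[OF inc])
    show "(- (inverse \<alpha> *\<^sub>R (q + r'))) $ i \<le> (- (inverse \<alpha> *\<^sub>R (q + r))) $ i" for i
      using rr(3) ax(1) unfolding vge_def by (simp add: field_simps)
    obtain j where "r' $ j \<noteq> r $ j" using rr(4) by (auto simp: vec_eq_iff)
    hence "(- (inverse \<alpha> *\<^sub>R (q + r'))) $ j \<noteq> (- (inverse \<alpha> *\<^sub>R (q + r))) $ j"
      using ax(1) by simp
    thus "- (inverse \<alpha> *\<^sub>R (q + r)) \<noteq> - (inverse \<alpha> *\<^sub>R (q + r'))" by metis
  qed
  thus False using ax ay by simp
qed

lemma pathind: "PathIndependence (cfmm phi)"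
  unfolding PathIndependence_def
proof (intro allI impI)
  fix h r r'
  assume r: "r \<in> cfmm phi h" and r': "r' \<in> cfmm phi (h @ [r])"
  show "r + r' \<in> cfmm phi h"
  proof (cases "h = []")
    case True
    thus ?thesis using r' by (simp add: cfmm_def reserves_def)
  next
    case False
    thus ?thesis using r r' by (simp add: cfmm_def reserves_def add.assoc)
  qed
qed

lemma bounded: "BoundedReserves (cfmm phi)"
  unfolding BoundedReserves_def
proof (intro conjI ballI)
  show "pos_orthant \<subseteq> cfmm phi []" by (simp add: cfmm_def)
  fix h assume "h \<in> valhist (cfmm phi)"
  from valhist_pos[OF this] show "vge (reserves h) 0"
    unfolding pos_orthant_def vge_def by (simp add: less_imp_le)
qed

lemma lin_fact:
  fixes u k P Q :: real
  shows "(1 - u) * (- (k * P)) + u * (- (k * Q)) = - k * ((1 - u) * P + u * Q)"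
  by (simp add: algebra_simps)

lemma arith_comb:
  fixes a al x r r' b :: real
  assumes "0 < a" "0 < al"
  shows "(1 - 1 / (1 + a)) * (- (inverse al * (x - r + r'))) + 1 / (1 + a) * (- (inverse al * (x + a * r - b * r')))
    = - (inverse al * (x - (b - a) / (1 + a) * r'))"
proof -
  have d: "1 + a \<noteq> 0" using assms by auto
  have br: "(1 - 1 / (1 + a)) * (x - r + r') + 1 / (1 + a) * (x + a * r - b * r') = x - (b - a) / (1 + a) * r'"
  proof -
    have e: "1 - 1 / (1 + a) = a / (1 + a)" using d by (simp add: field_simps)
    have d2: "1 + (a * a + a * 2) \<noteq> 0" using assms(1) zero_le_square[of a] by linarith
    show ?thesis unfolding e using d d2 by (simp add: field_simps)
  qed
  have "(1 - 1 / (1 + a)) * (- (inverse al * (x - r + r'))) + 1 / (1 + a) * (- (inverse al * (x + a * r - b * r')))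
     = - inverse al * ((1 - 1 / (1 + a)) * (x - r + r') + 1 / (1 + a) * (x + a * r - b * r'))"
    using lin_fact[of "1 / (1 + a)" "inverse al" "x - r + r'" "x + a * r - b * r'"] .
  also have "\<dots> = - (inverse al * (x - (b - a) / (1 + a) * r'))" unfolding br by simp
  finally show ?thesis .
qed

lemma demand:
  fixes C :: "real^'n \<Rightarrow> real"
  assumes cv: "convex_on UNIV C" and inc: "increasing_fn C" and inv: "one_invariant C"
    and c0: "C 0 > 0"
  shows "DemandResponsiveness (cfmm (potential C))"
  unfolding DemandResponsiveness_def
proof (intro ballI allI impI)
  fix h and r r' :: "real^'n" and a b :: real
  assume h: "h \<in> valhist (cfmm (potential C))"
    and A: "vge r 0 \<and> vge r' 0 \<and> r \<noteq> 0 \<and> r' \<noteq> 0 \<and> r - r' \<in> cfmm (potential C) h \<and> 0 < a \<and> 0 < b \<and>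
        a *\<^sub>R r - b *\<^sub>R r' \<in> cfmm (potential C) (h @ [r - r'])"
  have hne: "h \<noteq> []" using valhist_ne[OF h] .
  define q where "q = reserves h"
  have qp: "q \<in> pos_orthant" unfolding q_def using valhist_pos[OF h] .
  define x where "x = q + (r - r')"
  define D where "D = x + (a *\<^sub>R r - b *\<^sub>R r')"
  have X: "x \<in> pos_orthant" "potential C x = potential C q"
    using A hne unfolding cfmm_def q_def x_def by auto
  have rx: "reserves (h @ [r - r']) = x" unfolding x_def q_def reserves_def by simp
  have Dp: "D \<in> pos_orthant" "potential C D = potential C x"
    using A unfolding cfmm_def rx D_def by auto
  define \<alpha> where "\<alpha> = potential C q"
  have aq: "0 < \<alpha>" "C (- (inverse \<alpha> *\<^sub>R q)) = 0"
    using phi_char[OF cv inc inv c0 qp] unfolding \<alpha>_def by auto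
  have ax: "C (- (inverse \<alpha> *\<^sub>R x)) = 0"
    using phi_char[OF cv inc inv c0 X(1)] X(2) unfolding \<alpha>_def by auto
  have aD: "C (- (inverse \<alpha> *\<^sub>R D)) = 0"
    using phi_char[OF cv inc inv c0 Dp(1)] Dp(2) X(2) unfolding \<alpha>_def by auto
  show "b \<le> a"
  proof (rule ccontr)
    assume "\<not> b \<le> a"
    hence ba: "a < b" by simp
    have a0: "0 < a" using A by simp
    define t where "t = 1 / (1 + a)"
    define c where "c = (b - a) / (1 + a)"
    have t01: "0 \<le> t" "t \<le> 1" using a0 by (auto simp: t_def)
    have c0': "c > 0" using ba a0 by (simp add: c_def)
    have comb: "(1 - t) *\<^sub>R (- (inverse \<alpha> *\<^sub>R q)) + t *\<^sub>R (- (inverse \<alpha> *\<^sub>R D))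
        = - (inverse \<alpha> *\<^sub>R (x - c *\<^sub>R r'))"
    proof (subst vec_eq_iff, intro allI)
      fix i
      have "q $ i = x $ i - r $ i + r' $ i" unfolding x_def by simp
      moreover have "D $ i = x $ i + a * r $ i - b * r' $ i" unfolding D_def by simp
      ultimately have e: "(1 - t) * (- (inverse \<alpha> * q $ i)) + t * (- (inverse \<alpha> * D $ i))
        = - (inverse \<alpha> * (x $ i - c * r' $ i))"
        using arith_comb[OF a0 aq(1)] unfolding t_def c_def by simp
      show "((1 - t) *\<^sub>R (- (inverse \<alpha> *\<^sub>R q)) + t *\<^sub>R (- (inverse \<alpha> *\<^sub>R D))) $ i
        = (- (inverse \<alpha> *\<^sub>R (x - c *\<^sub>R r'))) $ i"
        using e by simp
    qed
    have "C (- (inverse \<alpha> *\<^sub>R (x - c *\<^sub>R r'))) \<le> (1 - t) * C (- (inverse \<alpha> *\<^sub>R q)) + t * C (- (inverse \<alpha> *\<^sub>R D))"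
      using convex_onD[OF cv t01] comb by (metis UNIV_I)
    hence le0: "C (- (inverse \<alpha> *\<^sub>R (x - c *\<^sub>R r'))) \<le> 0" using aq aD by simp
    have r'i: "r' $ i \<ge> 0" for i using A unfolding vge_def by simp
    have "r' \<noteq> 0" using A by simp
    then obtain j where j: "r' $ j \<noteq> 0" by (auto simp: vec_eq_iff)
    have "C (- (inverse \<alpha> *\<^sub>R x)) < C (- (inverse \<alpha> *\<^sub>R (x - c *\<^sub>R r')))"
    proof (rule incD[OF inc])
      show "(- (inverse \<alpha> *\<^sub>R x)) $ i \<le> (- (inverse \<alpha> *\<^sub>R (x - c *\<^sub>R r'))) $ i" for i
        using r'i[of i] c0' aq(1) by (simp add: field_simps)
      have "(- (inverse \<alpha> *\<^sub>R x)) $ j \<noteq> (- (inverse \<alpha> *\<^sub>R (x - c *\<^sub>R r'))) $ j"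
        using j c0' aq(1) by simp
      thus "- (inverse \<alpha> *\<^sub>R (x - c *\<^sub>R r')) \<noteq> - (inverse \<alpha> *\<^sub>R x)" by metis
    qed
    thus False using ax le0 by simp
  qed
qed

theorem proposition4p5:
  fixes C :: "real^'n \<Rightarrow> real"
  assumes "convex_on UNIV C"
    and "increasing_fn C"
    and "one_invariant C"
    and "C 0 > 0"
    and "{q. C q = 0} \<subseteq> neg_orthant"
  shows "(\<forall>q \<in> pos_orthant. \<exists>!\<alpha>. 0 < \<alpha> \<and> C (- (inverse \<alpha> *\<^sub>R q)) = 0)
    \<and> Liquidation (cfmm (potential C))
    \<and> NoDominatedTrades (cfmm (potential C))
    \<and> PathIndependence (cfmm (potential C))
    \<and> DemandResponsiveness (cfmm (potential C))
    \<and> BoundedReserves (cfmm (potential C))"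
proof (intro conjI)
  show "\<forall>q \<in> pos_orthant. \<exists>!\<alpha>. 0 < \<alpha> \<and> C (- (inverse \<alpha> *\<^sub>R q)) = 0"
  proof
    fix q :: "real^'n" assume q: "q \<in> pos_orthant"
    show "\<exists>!\<alpha>. 0 < \<alpha> \<and> C (- (inverse \<alpha> *\<^sub>R q)) = 0"
      using root_exists[OF assms(1-4) q] root_unique[OF assms(2) q] by blast
  qed
  show "Liquidation (cfmm (potential C))" using liquidation[OF assms] .
  show "NoDominatedTrades (cfmm (potential C))" using nodom[OF assms(1-4)] .
  show "PathIndependence (cfmm (potential C))" by (rule pathind)
  show "DemandResponsiveness (cfmm (potential C))" using demand[OF assms(1-4)] .
  show "BoundedReserves (cfmm (potential C))" by (rule bounded)
qed

end
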